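(* Let a thermodynamic Stephani universe be given and consider any thermodynamic scheme with specific entropy $s=s(w)$ ($s'\neq0$), matter density $n=(1+bw)^3/(R^3N(w))$ ($N>0$) and temperature $$\Theta=\frac{(\rho+p)R^3[N'(w)(1+bw)-3N(w)b]}{s'(w)(1+bw)^4}.$$ If the fluid acceleration $\mathbf a$ satisfies $\mathbf a=-\perp d\ln\Theta$ (equivalently $\partial_w(\alpha\Theta)=0$), then $b$ is constant, i.e. the metric is a FLRW universe. Hence a thermodynamic Stephani universe can describe a fluid with non-vanishing thermal conductivity coefficient only in the FLRW case.
   Context: Thermodynamic Stephani universe: $ds^2=-\alpha^2dt^2+\Omega^2(dx^2+dy^2+dz^2)$ with $L=R(t)/(1+b(t)w)$, $\Omega=\frac{w}{2z}L$, $\alpha=R\,\partial_R\ln L=\frac{1+(b-Rb')w}{1+bw}$, $w=2z/(1+\frac\varepsilon4 r^2)$, $r^2=x^2+y^2+z^2$, $\varepsilon\in\{0,\pm1\}$; functions of $t$ are regarded as functions of $R$ (prime $=d/dR$). Fluid velocity $u=\alpha^{-1}\partial_t$, $\rho=\frac{3}{R^2}(\dot R^2+\varepsilon-4b^2)$, $p=-\rho-\frac R3\frac{\rho'(R)}{\alpha}$. $\mathbf a=\nabla_uu$ is the acceleration, $\perp$ is the orthogonal projection onto the space orthogonal to $u$. *)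

theory Defs
  imports "HOL-Analysis.Analysis"
begin

text \<open>All functions of time are regarded as
functions of the scale factor R; the prime is d/dR (for b, rho) and d/dw
(for N, s).  The function V gives (dR/dt)^2 regarded as a function of R.\<close>

definition st_w :: "real \<Rightarrow> real \<Rightarrow> real \<Rightarrow> real \<Rightarrow> real" where
  "st_w eps x y z = 2 * z / (1 + eps / 4 * (x^2 + y^2 + z^2))"

definition st_alpha :: "(real \<Rightarrow> real) \<Rightarrow> real \<Rightarrow> real \<Rightarrow> real" where
  "st_alpha b R w = (1 + (b R - R * deriv b R) * w) / (1 + b R * w)"

definition st_rho :: "real \<Rightarrow> (real \<Rightarrow> real) \<Rightarrow> (real \<Rightarrow> real) \<Rightarrow> real \<Rightarrow> real" where
  "st_rho eps V b R = 3 / R^2 * (V R + eps - 4 * (b R)^2)"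

definition st_p :: "real \<Rightarrow> (real \<Rightarrow> real) \<Rightarrow> (real \<Rightarrow> real) \<Rightarrow> real \<Rightarrow> real \<Rightarrow> real" where
  "st_p eps V b R w =
     - st_rho eps V b R - R / 3 * deriv (st_rho eps V b) R / st_alpha b R w"

definition st_n :: "(real \<Rightarrow> real) \<Rightarrow> (real \<Rightarrow> real) \<Rightarrow> real \<Rightarrow> real \<Rightarrow> real" where
  "st_n b N R w = (1 + b R * w)^3 / (R^3 * N w)"

definition st_Theta :: "real \<Rightarrow> (real \<Rightarrow> real) \<Rightarrow> (real \<Rightarrow> real) \<Rightarrow> (real \<Rightarrow> real)
    \<Rightarrow> (real \<Rightarrow> real) \<Rightarrow> real \<Rightarrow> real \<Rightarrow> real" where
  "st_Theta eps V b N s R w =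
     (st_rho eps V b R + st_p eps V b R w) * R^3
       * (deriv N w * (1 + b R * w) - 3 * N w * b R)
     / (deriv s w * (1 + b R * w)^4)"

end

theory Submission
  imports Defs "HOL-Computational_Algebra.Polynomial"
begin

theorem mainTheorem11:
  fixes eps :: real and b V N s :: "real \<Rightarrow> real" and J W :: "real set"
  assumes eps: "eps \<in> {-1, 0, 1}"
    and J: "open J" "is_interval J" "J \<noteq> {}" "J \<subseteq> {0<..}"
    and W: "open W" "is_interval W" "W \<noteq> {}"
    and W_range: "W \<subseteq> {st_w eps x y z | x y z. 1 + eps / 4 * (x^2 + y^2 + z^2) > 0}"
    and b_diff: "\<And>R. R \<in> J \<Longrightarrow> b differentiable (at R)"
    and V_diff: "\<And>R. R \<in> J \<Longrightarrow> V differentiable (at R)"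
    and N_diff: "\<And>w. w \<in> W \<Longrightarrow> N differentiable (at w)"
    and s_diff: "\<And>w. w \<in> W \<Longrightarrow> s differentiable (at w)"
    and N_pos: "\<And>w. w \<in> W \<Longrightarrow> N w > 0"
    and s'_nz: "\<And>w. w \<in> W \<Longrightarrow> deriv s w \<noteq> 0"
    and nondeg: "\<And>R w. R \<in> J \<Longrightarrow> w \<in> W \<Longrightarrow> 1 + b R * w \<noteq> 0"
    and Theta_pos: "\<And>R w. R \<in> J \<Longrightarrow> w \<in> W \<Longrightarrow> st_Theta eps V b N s R w > 0"
    and accel: "\<And>R w. R \<in> J \<Longrightarrow> w \<in> W \<Longrightarrow>
       ((\<lambda>w'. st_alpha b R w' * st_Theta eps V b N s R w') has_real_derivative 0) (at w)"
  shows "\<exists>c. \<forall>R\<in>J. b R = c"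
proof -
  obtain w0 where w0: "w0 \<in> W" using W(3) by blast
  obtain e where e: "e > 0" "ball w0 e \<subseteq> W" using W(1) w0 open_contains_ball by blast
  obtain w1 w2 where w12: "w1 \<in> W" "w2 \<in> W" "w1 \<noteq> 0" "w1 \<noteq> w2"
  proof (cases "w0 + e/2 = 0")
    case True
    have "w0 - e/2 \<in> W" "w0 + e/2 \<in> W" using e by (auto simp: dist_real_def)
    then show ?thesis using that[of "w0 - e/2" "w0 + e/2"] True e by auto
  next
    case False
    have "w0 - e/2 \<in> W" "w0 + e/2 \<in> W" using e by (auto simp: dist_real_def)
    then show ?thesis using that[of "w0 + e/2" "w0 - e/2"] False e by auto
  qed
  define F where "F = (\<lambda>\<beta> w. deriv N w * (1 + \<beta> * w) - 3 * N w * \<beta>)"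
  have key: "F (b R) w1 * deriv s w2 * (1 + b R * w2)^4 = F (b R) w2 * deriv s w1 * (1 + b R * w1)^4"
    if R: "R \<in> J" for R
  proof -
    let ?g = "\<lambda>w'. st_alpha b R w' * st_Theta eps V b N s R w'"
    have "\<exists>c. \<forall>x\<in>W. ?g x = c"
      apply (rule has_field_derivative_zero_constant)
      using is_interval_convex[OF W(2)] accel[OF R] by (auto intro: has_field_derivative_at_within)
    then have geq: "?g w1 = ?g w2" using w12 by metis
    have Rpos: "R > 0" using J(4) R by auto
    define r' where "r' = deriv (st_rho eps V b) R"
    have form: "?g w = - (R^4 / 3) * r' * F (b R) w / (deriv s w * (1 + b R * w)^4)"
      and r'nz: "r' \<noteq> 0" and Fnz: "F (b R) w \<noteq> 0"
      if w: "w \<in> W" for w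
    proof -
      have tp: "st_Theta eps V b N s R w > 0" using Theta_pos[OF R w] .
      have an: "st_alpha b R w \<noteq> 0"
      proof
        assume "st_alpha b R w = 0"
        then have "st_Theta eps V b N s R w = 0"
          by (simp add: st_Theta_def st_p_def)
        with tp show False by simp
      qed
      have "st_rho eps V b R + st_p eps V b R w = - R / 3 * r' / st_alpha b R w"
        by (simp add: st_p_def r'_def)
      then have ap: "st_alpha b R w * (st_rho eps V b R + st_p eps V b R w) = - R / 3 * r'"
        using an by simp
      have "?g w = (st_alpha b R w * (st_rho eps V b R + st_p eps V b R w)) * R^3 * F (b R) w
              / (deriv s w * (1 + b R * w)^4)"
        unfolding st_Theta_def F_def by simp
      also have "\<dots> = - (R^4 / 3) * r' * F (b R) w / (deriv s w * (1 + b R * w)^4)"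
        unfolding ap by (simp add: power_numeral_reduce)
      finally have "?g w = - (R^4 / 3) * r' * F (b R) w / (deriv s w * (1 + b R * w)^4)" .
      then show "?g w = - (R^4 / 3) * r' * F (b R) w / (deriv s w * (1 + b R * w)^4)" .
      show "r' \<noteq> 0" using tp \<open>st_rho eps V b R + st_p eps V b R w = _\<close>
        by (auto simp: st_Theta_def)
      show "F (b R) w \<noteq> 0" using tp by (auto simp: st_Theta_def F_def)
    qed
    have d1: "deriv s w1 * (1 + b R * w1)^4 \<noteq> 0" using s'_nz nondeg R w12 by simp
    have d2: "deriv s w2 * (1 + b R * w2)^4 \<noteq> 0" using s'_nz nondeg R w12 by simp
    have "F (b R) w1 / (deriv s w1 * (1 + b R * w1)^4) = F (b R) w2 / (deriv s w2 * (1 + b R * w2)^4)"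
    proof -
      have "(R^4 * r' / 3) * (F (b R) w1 / (deriv s w1 * (1 + b R * w1)^4)) =
            (R^4 * r' / 3) * (F (b R) w2 / (deriv s w2 * (1 + b R * w2)^4))"
        using geq form[OF w12(1)] form[OF w12(2)] by (simp add: mult.assoc)
      moreover have "R^4 * r' / 3 \<noteq> 0" using r'nz[OF w12(1)] Rpos by simp
      ultimately show ?thesis using mult_left_cancel by blast
    qed
    then show ?thesis using d1 d2 by (simp add: field_simps)
  qed
  define P where "P = smult (deriv s w2) ([:deriv N w1, deriv N w1 * w1 - 3 * N w1:] * [:1, w2:]^4)
     - smult (deriv s w1) ([:deriv N w2, deriv N w2 * w2 - 3 * N w2:] * [:1, w1:]^4)"
  have polyP: "poly P \<beta> = F \<beta> w1 * deriv s w2 * (1 + \<beta> * w2)^4 - F \<beta> w2 * deriv s w1 * (1 + \<beta> * w1)^4" for \<beta>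
    by (simp add: P_def F_def algebra_simps)
  have "poly P (-1/w1) = 3 * N w1 / w1 * deriv s w2 * (1 - w2/w1)^4"
    using w12 by (simp add: polyP F_def field_simps)
  moreover have "3 * N w1 / w1 * deriv s w2 * (1 - w2/w1)^4 \<noteq> 0"
    using w12 N_pos[OF w12(1)] s'_nz[OF w12(2)] by (simp add: field_simps)
  ultimately have "P \<noteq> 0" by auto
  then have fin: "finite {x. poly P x = 0}" by (rule poly_roots_finite)
  have sub: "b ` J \<subseteq> {x. poly P x = 0}" using key polyP by auto
  have "continuous_on J b"
    using b_diff differentiable_imp_continuous_on
    by (meson continuous_at_imp_continuous_on differentiable_imp_continuous_within)
  then have "connected (b ` J)"
    using connected_continuous_image is_interval_connected[OF J(2)] by blast
  moreover have "finite (b ` J)" using finite_subset[OF sub fin] .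
  ultimately have "b ` J = {} \<or> (\<exists>a. b ` J = {a})" using connected_finite_iff_sing by blast
  then show ?thesis by auto
qed

end
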